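(* Let $\mathcal{G}=(V,L)$ be a finite connected undirected graph with monitor set $M$ and non-monitor set $N=V\setminus M$, $\sigma=|N|$, let $S\subseteq N$ be nonempty, let $m\in M$, and let $q$ be an integer with $0\le q\le\sigma-1$. The following are equivalent: (1) for every set $V'$ consisting of $m$ together with at most $q$ non-monitors, each connected component of $\mathcal{G}-V'$ that contains a node of $S$ also contains a monitor; (2) $\Gamma_{\mathcal{G}_m}(S,m')\ge q+1$.
   Context: $\mathcal{G}-V'$ denotes deletion of the nodes of $V'$ and incident links. For $M'\subseteq M$, $\mathcal{N}(M')$ is the set of non-monitors adjacent to at least one monitor of $M'$. $\mathcal{G}_m$ is obtained from $\mathcal{G}$ by deleting all monitors, adding a virtual node $m'$, and linking $m'$ to every node of $\mathcal{N}(M\setminus\{m\})$. For nodes $s,t$ of a graph $\mathcal{H}$, $C_{\mathcal{H}}(s,t)$ is a minimum-cardinality set of nodes (other than $s,t$) whose deletion destroys all $s$–$t$ paths; if $s,t$ are adjacent, $C_{\mathcal{H}}(s,t):=V(\mathcal{H})\setminus\{t\}$. $\Gamma_{\mathcal{H}}(S,m'):=\min_{w\in S}|C_{\mathcal{H}}(w,m')|$. *)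

theory Defs
  imports Main
begin

definition ugraph :: "'a set \<Rightarrow> ('a \<Rightarrow> 'a \<Rightarrow> bool) \<Rightarrow> bool" where
  "ugraph V E \<longleftrightarrow> finite V \<and> (\<forall>u v. E u v \<longrightarrow> u \<in> V \<and> v \<in> V)
     \<and> (\<forall>u v. E u v \<longrightarrow> E v u) \<and> (\<forall>u. \<not> E u u)"

definition reach :: "('a \<Rightarrow> 'a \<Rightarrow> bool) \<Rightarrow> 'a set \<Rightarrow> 'a \<Rightarrow> 'a \<Rightarrow> bool" where
  "reach E W s t \<longleftrightarrow> s \<in> W \<and> (\<lambda>x y. E x y \<and> x \<in> W \<and> y \<in> W)\<^sup>*\<^sup>* s t"

definition connected_graph :: "'a set \<Rightarrow> ('a \<Rightarrow> 'a \<Rightarrow> bool) \<Rightarrow> bool" where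
  "connected_graph V E \<longleftrightarrow> ugraph V E \<and> (\<forall>u\<in>V. \<forall>v\<in>V. reach E V u v)"

definition components :: "('a \<Rightarrow> 'a \<Rightarrow> bool) \<Rightarrow> 'a set \<Rightarrow> 'a set set" where
  "components E W = {{t. reach E W s t} | s. s \<in> W}"

definition nbr_nonmon :: "'a set \<Rightarrow> ('a \<Rightarrow> 'a \<Rightarrow> bool) \<Rightarrow> 'a set \<Rightarrow> 'a set \<Rightarrow> 'a set" where
  "nbr_nonmon V E M M' = {v \<in> V - M. \<exists>u\<in>M'. E u v}"

text \<open>G_m: monitors deleted, virtual node m' (= None) added, linked to every node of
  \<N>(M - {m}). Non-monitor v is represented by Some v.\<close>
definition Gm_V :: "'a set \<Rightarrow> 'a set \<Rightarrow> 'a option set" where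
  "Gm_V V M = insert None (Some ` (V - M))"

definition Gm_E :: "'a set \<Rightarrow> ('a \<Rightarrow> 'a \<Rightarrow> bool) \<Rightarrow> 'a set \<Rightarrow> 'a \<Rightarrow> 'a option \<Rightarrow> 'a option \<Rightarrow> bool" where
  "Gm_E V E M m x y = (case (x, y) of
       (Some u, Some v) \<Rightarrow> u \<in> V - M \<and> v \<in> V - M \<and> E u v
     | (None, Some v) \<Rightarrow> v \<in> nbr_nonmon V E M (M - {m})
     | (Some u, None) \<Rightarrow> u \<in> nbr_nonmon V E M (M - {m})
     | (None, None) \<Rightarrow> False)"

definition min_cut_card :: "'b set \<Rightarrow> ('b \<Rightarrow> 'b \<Rightarrow> bool) \<Rightarrow> 'b \<Rightarrow> 'b \<Rightarrow> nat" where
  "min_cut_card VH EH s t =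
     (if EH s t then card (VH - {t})
      else (LEAST k. \<exists>C. C \<subseteq> VH - {s, t} \<and> \<not> reach EH (VH - C) s t \<and> card C = k))"

definition Gamma :: "'b set \<Rightarrow> ('b \<Rightarrow> 'b \<Rightarrow> bool) \<Rightarrow> 'b set \<Rightarrow> 'b \<Rightarrow> nat" where
  "Gamma VH EH S t = Min ((\<lambda>w. min_cut_card VH EH w t) ` S)"

end

theory Submission
  imports Defs
begin

lemma reach_in: "reach E W s t \<Longrightarrow> t \<in> W"
  unfolding reach_def
proof -
  assume h: "s \<in> W \<and> (\<lambda>x y. E x y \<and> x \<in> W \<and> y \<in> W)\<^sup>*\<^sup>* s t"
  then have "(\<lambda>x y. E x y \<and> x \<in> W \<and> y \<in> W)\<^sup>*\<^sup>* s t" by blast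
  then show "t \<in> W" using h by (induct rule: rtranclp_induct) auto
qed

lemma reach_trans: "reach E W s t \<Longrightarrow> reach E W t u \<Longrightarrow> reach E W s u"
  unfolding reach_def by auto

lemma reach_one: "x \<in> W \<Longrightarrow> y \<in> W \<Longrightarrow> E x y \<Longrightarrow> reach E W x y"
  unfolding reach_def by (simp add: r_into_rtranclp)

lemma reach_cons: "x \<in> W \<Longrightarrow> E x y \<Longrightarrow> reach E W y z \<Longrightarrow> reach E W x z"
  unfolding reach_def by (auto intro: converse_rtranclp_into_rtranclp)

lemma A1:
  assumes ug: "ugraph V E" and mM: "m \<in> M" and XN: "X \<subseteq> V - M"
  shows "(\<lambda>x y. E x y \<and> x \<in> V - insert m X \<and> y \<in> V - insert m X)\<^sup>*\<^sup>* a b \<Longrightarrow> b \<in> M \<Longrightarrow> a \<in> V - M - X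
     \<Longrightarrow> reach (Gm_E V E M m) (Gm_V V M - Some ` X) (Some a) None"
proof (induction rule: converse_rtranclp_induct)
  case base
  then show ?case by auto
next
  case (step a y)
  have sym: "E y a" using step(1) ug unfolding ugraph_def by blast
  have inA: "Some a \<in> Gm_V V M - Some ` X" using step(5) unfolding Gm_V_def by auto
  show ?case
  proof (cases "y \<in> M")
    case True
    then have "a \<in> nbr_nonmon V E M (M - {m})" using step(1,5) sym unfolding nbr_nonmon_def by auto
    then have "Gm_E V E M m (Some a) None" unfolding Gm_E_def by simp
    moreover have "None \<in> Gm_V V M - Some ` X" unfolding Gm_V_def by auto
    ultimately show ?thesis using inA by (meson reach_one)
  next
    case False
    then have yN: "y \<in> V - M - X" using step(1) by auto
    then have "Gm_E V E M m (Some a) (Some y)" using step(1,5) unfolding Gm_E_def by simp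
    moreover have "Some y \<in> Gm_V V M - Some ` X" using yN unfolding Gm_V_def by auto
    ultimately show ?thesis using inA step(3)[OF step(4) yN] by (meson reach_cons)
  qed
qed

lemma A2:
  assumes ug: "ugraph V E" and mM: "m \<in> M" and XN: "X \<subseteq> V - M" and MV: "M \<subseteq> V"
  shows "(\<lambda>x y. Gm_E V E M m x y \<and> x \<in> Gm_V V M - Some ` X \<and> y \<in> Gm_V V M - Some ` X)\<^sup>*\<^sup>* x z
     \<Longrightarrow> z = None \<Longrightarrow> x = Some a \<Longrightarrow> a \<in> V - M - X
     \<Longrightarrow> \<exists>m2\<in>M. reach E (V - insert m X) a m2"
proof (induction arbitrary: a rule: converse_rtranclp_induct)
  case base
  then show ?case by auto
next
  case (step x y)
  have aW: "a \<in> V - insert m X" using step(6) mM by auto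
  show ?case
  proof (cases y)
    case None
    then have "a \<in> nbr_nonmon V E M (M - {m})" using step(1,5) None by (simp add: Gm_E_def)
    then obtain u where u: "u \<in> M - {m}" "E u a" unfolding nbr_nonmon_def by auto
    have "E a u" using u(2) ug unfolding ugraph_def by blast
    moreover have "u \<in> V - insert m X" using u MV XN by auto
    ultimately have "reach E (V - insert m X) a u" using aW by (meson reach_one)
    then show ?thesis using u(1) by (intro bexI[of _ u]) auto
  next
    case (Some b)
    have "b \<in> V - M \<and> E a b" using step(1,5) Some by (simp add: Gm_E_def)
    moreover have "b \<notin> X" using step(1) Some by auto
    ultimately have bN: "b \<in> V - M - X" by auto
    obtain m2 where m2: "m2 \<in> M" "reach E (V - insert m X) b m2" using step(3)[OF step(4) Some bN] by blast
    have "b \<in> V - insert m X" using bN mM by auto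
    then have "reach E (V - insert m X) a b" using aW \<open>b \<in> V - M \<and> E a b\<close> by (meson reach_one)
    then have "reach E (V - insert m X) a m2" using m2(2) by (rule reach_trans)
    then show ?thesis using m2(1) by auto
  qed
qed

lemma A:
  assumes ug: "ugraph V E" and mM: "m \<in> M" and XN: "X \<subseteq> V - M" and MV: "M \<subseteq> V"
    and aN: "a \<in> V - M - X"
  shows "(\<exists>m2\<in>M. reach E (V - insert m X) a m2) \<longleftrightarrow> reach (Gm_E V E M m) (Gm_V V M - Some ` X) (Some a) None"
proof
  assume "\<exists>m2\<in>M. reach E (V - insert m X) a m2"
  then obtain m2 where "m2 \<in> M" "reach E (V - insert m X) a m2" by blast
  then have r: "(\<lambda>x y. E x y \<and> x \<in> V - insert m X \<and> y \<in> V - insert m X)\<^sup>*\<^sup>* a m2"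
    unfolding reach_def by blast
  show "reach (Gm_E V E M m) (Gm_V V M - Some ` X) (Some a) None"
    by (rule A1[OF ug mM XN r \<open>m2 \<in> M\<close> aN])
next
  assume "reach (Gm_E V E M m) (Gm_V V M - Some ` X) (Some a) None"
  then have r: "(\<lambda>x y. Gm_E V E M m x y \<and> x \<in> Gm_V V M - Some ` X \<and> y \<in> Gm_V V M - Some ` X)\<^sup>*\<^sup>* (Some a) None"
    unfolding reach_def by blast
  show "\<exists>m2\<in>M. reach E (V - insert m X) a m2"
    by (rule A2[OF ug mM XN MV r refl refl aN])
qed


lemma B:
  assumes mM: "m \<in> M" and XN: "X \<subseteq> V - M" and SN: "S \<subseteq> V - M"
  shows "(\<forall>C \<in> components E (V - insert m X). C \<inter> S \<noteq> {} \<longrightarrow> C \<inter> M \<noteq> {})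
     \<longleftrightarrow> (\<forall>w\<in>S - X. \<exists>m2\<in>M. reach E (V - insert m X) w m2)"
proof
  assume H: "\<forall>C \<in> components E (V - insert m X). C \<inter> S \<noteq> {} \<longrightarrow> C \<inter> M \<noteq> {}"
  show "\<forall>w\<in>S - X. \<exists>m2\<in>M. reach E (V - insert m X) w m2"
  proof
    fix w assume w: "w \<in> S - X"
    then have wW: "w \<in> V - insert m X" using SN mM by auto
    have Cin: "{t. reach E (V - insert m X) w t} \<in> components E (V - insert m X)"
      unfolding components_def using wW by auto
    have "reach E (V - insert m X) w w" using wW unfolding reach_def by simp
    then have "w \<in> {t. reach E (V - insert m X) w t} \<inter> S" using w by simp
    then have "{t. reach E (V - insert m X) w t} \<inter> M \<noteq> {}" using H Cin by (metis empty_iff)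
    then show "\<exists>m2\<in>M. reach E (V - insert m X) w m2" by auto
  qed
next
  assume H: "\<forall>w\<in>S - X. \<exists>m2\<in>M. reach E (V - insert m X) w m2"
  show "\<forall>C \<in> components E (V - insert m X). C \<inter> S \<noteq> {} \<longrightarrow> C \<inter> M \<noteq> {}"
  proof (intro ballI impI)
    fix C assume C: "C \<in> components E (V - insert m X)" and CS: "C \<inter> S \<noteq> {}"
    obtain s where s: "C = {t. reach E (V - insert m X) s t}" using C unfolding components_def by auto
    obtain w where w: "w \<in> S" "reach E (V - insert m X) s w" using CS s by auto
    have "w \<in> V - insert m X" using w(2) by (rule reach_in)
    then have "w \<in> S - X" using w(1) by blast
    then obtain m2 where "m2 \<in> M" "reach E (V - insert m X) w m2" using H by blast
    then have "reach E (V - insert m X) s m2" using w(2) reach_trans by metis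
    then have "m2 \<in> C \<inter> M" using s \<open>m2 \<in> M\<close> by simp
    then show "C \<inter> M \<noteq> {}" by auto
  qed
qed

lemma notreach2:
  assumes na: "\<not> EH s t" and ne: "s \<noteq> t"
  shows "\<not> reach EH {s, t} s t"
proof
  assume "reach EH {s, t} s t"
  then have r: "(\<lambda>x y. EH x y \<and> x \<in> {s, t} \<and> y \<in> {s, t})\<^sup>*\<^sup>* s t" unfolding reach_def by simp
  have "\<And>z. (\<lambda>x y. EH x y \<and> x \<in> {s, t} \<and> y \<in> {s, t})\<^sup>*\<^sup>* s z \<Longrightarrow> z = s"
  proof -
    fix z assume "(\<lambda>x y. EH x y \<and> x \<in> {s, t} \<and> y \<in> {s, t})\<^sup>*\<^sup>* s z"
    then show "z = s"
    proof (induct rule: rtranclp_induct)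
      case base then show ?case by simp
    next
      case (step y z) then show ?case using na by auto
    qed
  qed
  from this[OF r] have "t = s" .
  then show False using ne by simp
qed

lemma C:
  assumes ug: "ugraph V E" and wN: "w \<in> V - M" and q: "q + 1 \<le> card (V - M)"
  shows "q + 1 \<le> min_cut_card (Gm_V V M) (Gm_E V E M m) (Some w) None \<longleftrightarrow>
    (\<forall>X. X \<subseteq> V - M \<and> card X \<le> q \<and> w \<notin> X \<longrightarrow>
        reach (Gm_E V E M m) (Gm_V V M - Some ` X) (Some w) None)"
proof (cases "Gm_E V E M m (Some w) None")
  case True
  have "Gm_V V M - {None} = Some ` (V - M)" unfolding Gm_V_def by auto
  then have "card (Gm_V V M - {None}) = card (V - M)" by (simp add: card_image)
  then have L: "q + 1 \<le> min_cut_card (Gm_V V M) (Gm_E V E M m) (Some w) None"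
    using True q unfolding min_cut_card_def by simp
  have "\<forall>X. X \<subseteq> V - M \<and> card X \<le> q \<and> w \<notin> X \<longrightarrow>
        reach (Gm_E V E M m) (Gm_V V M - Some ` X) (Some w) None"
  proof (intro allI impI)
    fix X assume X: "X \<subseteq> V - M \<and> card X \<le> q \<and> w \<notin> X"
    have "Some w \<in> Gm_V V M - Some ` X" using X wN unfolding Gm_V_def by auto
    moreover have "None \<in> Gm_V V M - Some ` X" unfolding Gm_V_def by auto
    ultimately show "reach (Gm_E V E M m) (Gm_V V M - Some ` X) (Some w) None"
      using True by (meson reach_one)
  qed
  then show ?thesis using L by simp
next
  case False
  define P where "P = (\<lambda>k. \<exists>C. C \<subseteq> Gm_V V M - {Some w, None} \<and>
      \<not> reach (Gm_E V E M m) (Gm_V V M - C) (Some w) None \<and> card C = k)"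
  have mc: "min_cut_card (Gm_V V M) (Gm_E V E M m) (Some w) None = Least P"
    using False unfolding min_cut_card_def P_def by simp
  have "Gm_V V M - (Gm_V V M - {Some w, None}) = {Some w, None}"
    using wN unfolding Gm_V_def by auto
  then have ex: "P (card (Gm_V V M - {Some w, None}))"
    unfolding P_def apply (intro exI[where x="Gm_V V M - {Some w, None}"])
    using notreach2[of "Gm_E V E M m" "Some w" None, OF False option.distinct(2)] by simp
  have iff1: "q + 1 \<le> Least P \<longleftrightarrow> (\<forall>k. P k \<longrightarrow> q + 1 \<le> k)"
  proof
    assume "q + 1 \<le> Least P"
    then show "\<forall>k. P k \<longrightarrow> q + 1 \<le> k"
    proof (intro allI impI)
      fix k assume "q + 1 \<le> Least P" "P k"
      then have "Least P \<le> k" by (simp add: Least_le)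
      then show "q + 1 \<le> k" using \<open>q + 1 \<le> Least P\<close> by linarith
    qed
  next
    assume "\<forall>k. P k \<longrightarrow> q + 1 \<le> k"
    then show "q + 1 \<le> Least P" using LeastI[of P, OF ex] by simp
  qed
  have iff2: "(\<forall>k. P k \<longrightarrow> q + 1 \<le> k) \<longleftrightarrow> (\<forall>X. X \<subseteq> V - M \<and> card X \<le> q \<and> w \<notin> X \<longrightarrow>
        reach (Gm_E V E M m) (Gm_V V M - Some ` X) (Some w) None)"
  proof
    assume H: "\<forall>k. P k \<longrightarrow> q + 1 \<le> k"
    show "\<forall>X. X \<subseteq> V - M \<and> card X \<le> q \<and> w \<notin> X \<longrightarrow>
        reach (Gm_E V E M m) (Gm_V V M - Some ` X) (Some w) None"
    proof (intro allI impI)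
      fix X assume X: "X \<subseteq> V - M \<and> card X \<le> q \<and> w \<notin> X"
      have sub: "Some ` X \<subseteq> Gm_V V M - {Some w, None}" using X unfolding Gm_V_def by auto
      have cd: "card (Some ` X) = card X" by (simp add: card_image)
      show "reach (Gm_E V E M m) (Gm_V V M - Some ` X) (Some w) None"
      proof (rule ccontr)
        assume "\<not> reach (Gm_E V E M m) (Gm_V V M - Some ` X) (Some w) None"
        then have "P (card X)" unfolding P_def apply (intro exI[where x="Some ` X"])
          using sub cd by simp
        then have "q + 1 \<le> card X" using H by simp
        then show False using X by linarith
      qed
    qed
  next
    assume H: "\<forall>X. X \<subseteq> V - M \<and> card X \<le> q \<and> w \<notin> X \<longrightarrow>
        reach (Gm_E V E M m) (Gm_V V M - Some ` X) (Some w) None"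
    show "\<forall>k. P k \<longrightarrow> q + 1 \<le> k"
    proof (intro allI impI)
      fix k assume "P k"
      then obtain C where C: "C \<subseteq> Gm_V V M - {Some w, None}"
        "\<not> reach (Gm_E V E M m) (Gm_V V M - C) (Some w) None" "card C = k"
        unfolding P_def by blast
      define X where "X = {x. Some x \<in> C}"
      have CX: "C = Some ` X"
      proof
        show "C \<subseteq> Some ` X"
        proof
          fix c assume c: "c \<in> C"
          then obtain x where "c = Some x" using C(1) by (cases c) auto
          then show "c \<in> Some ` X" using c unfolding X_def by blast
        qed
        show "Some ` X \<subseteq> C" unfolding X_def by blast
      qed
      have XN: "X \<subseteq> V - M" using C(1) unfolding X_def Gm_V_def by auto
      have wX: "w \<notin> X" using C(1) unfolding X_def by auto
      have "card X = k" using C(3) CX by (simp add: card_image)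
      show "q + 1 \<le> k"
      proof (rule ccontr)
        assume "\<not> q + 1 \<le> k"
        then have "card X \<le> q" using \<open>card X = k\<close> by simp
        then have "reach (Gm_E V E M m) (Gm_V V M - Some ` X) (Some w) None" using H XN wX by simp
        then show False using C(2) CX by simp
      qed
    qed
  qed
  show ?thesis using mc iff1 iff2 by simp
qed

theorem lemma6:
  fixes V :: "'a set" and E :: "'a \<Rightarrow> 'a \<Rightarrow> bool" and M S :: "'a set" and m :: 'a and q :: nat
  assumes "connected_graph V E"
    and "M \<subseteq> V"
    and "S \<subseteq> V - M" and "S \<noteq> {}"
    and "m \<in> M"
    and "q \<le> card (V - M) - 1"
  shows "(\<forall>X. X \<subseteq> V - M \<and> card X \<le> q \<longrightarrow>
            (\<forall>C \<in> components E (V - insert m X). C \<inter> S \<noteq> {} \<longrightarrow> C \<inter> M \<noteq> {}))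
         \<longleftrightarrow> Gamma (Gm_V V M) (Gm_E V E M m) (Some ` S) None \<ge> q + 1"proof -
  have ug: "ugraph V E" using assms(1) unfolding connected_graph_def by blast
  have finV: "finite V" using ug unfolding ugraph_def by blast
  have finS: "finite S" using assms(3) finV by (meson finite_Diff finite_subset)
  have cardN: "q + 1 \<le> card (V - M)"
  proof -
    obtain s where "s \<in> S" using assms(4) by blast
    then have "V - M \<noteq> {}" using assms(3) by blast
    then have "card (V - M) \<ge> 1" using finV by (simp add: Suc_leI card_gt_0_iff)
    then show ?thesis using assms(6) by linarith
  qed
  let ?R = "\<lambda>X w. reach (Gm_E V E M m) (Gm_V V M - Some ` X) (Some w) None"
  have s1: "(\<forall>X. X \<subseteq> V - M \<and> card X \<le> q \<longrightarrow>
            (\<forall>C \<in> components E (V - insert m X). C \<inter> S \<noteq> {} \<longrightarrow> C \<inter> M \<noteq> {}))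
     \<longleftrightarrow> (\<forall>X. X \<subseteq> V - M \<and> card X \<le> q \<longrightarrow> (\<forall>w\<in>S - X. ?R X w))"
  proof -
    have "\<And>X. X \<subseteq> V - M \<Longrightarrow> (\<forall>C \<in> components E (V - insert m X). C \<inter> S \<noteq> {} \<longrightarrow> C \<inter> M \<noteq> {})
           \<longleftrightarrow> (\<forall>w\<in>S - X. ?R X w)"
    proof -
      fix X assume X: "X \<subseteq> V - M"
      have "(\<forall>w\<in>S - X. \<exists>m2\<in>M. reach E (V - insert m X) w m2) \<longleftrightarrow> (\<forall>w\<in>S - X. ?R X w)"
      proof (intro ball_cong refl)
        fix w assume "w \<in> S - X"
        then have "w \<in> V - M - X" using assms(3) by blast
        then show "(\<exists>m2\<in>M. reach E (V - insert m X) w m2) = ?R X w"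
          by (rule A[OF ug assms(5) X assms(2)])
      qed
      then show "(\<forall>C \<in> components E (V - insert m X). C \<inter> S \<noteq> {} \<longrightarrow> C \<inter> M \<noteq> {})
           \<longleftrightarrow> (\<forall>w\<in>S - X. ?R X w)" using B[OF assms(5) X assms(3)] by simp
    qed
    then show ?thesis by metis
  qed
  have s2: "(\<forall>X. X \<subseteq> V - M \<and> card X \<le> q \<longrightarrow> (\<forall>w\<in>S - X. ?R X w))
     \<longleftrightarrow> (\<forall>w\<in>S. q + 1 \<le> min_cut_card (Gm_V V M) (Gm_E V E M m) (Some w) None)"
  proof -
    have sw: "(\<forall>X. X \<subseteq> V - M \<and> card X \<le> q \<longrightarrow> (\<forall>w\<in>S - X. ?R X w))
       = (\<forall>w\<in>S. \<forall>X. X \<subseteq> V - M \<and> card X \<le> q \<and> w \<notin> X \<longrightarrow> ?R X w)" by blast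
    have H: "\<And>w. w \<in> S \<Longrightarrow> q + 1 \<le> min_cut_card (Gm_V V M) (Gm_E V E M m) (Some w) None \<longleftrightarrow>
      (\<forall>X. X \<subseteq> V - M \<and> card X \<le> q \<and> w \<notin> X \<longrightarrow> ?R X w)"
    proof -
      fix w assume "w \<in> S"
      then have "w \<in> V - M" using assms(3) by blast
      then show "q + 1 \<le> min_cut_card (Gm_V V M) (Gm_E V E M m) (Some w) None \<longleftrightarrow>
      (\<forall>X. X \<subseteq> V - M \<and> card X \<le> q \<and> w \<notin> X \<longrightarrow> ?R X w)"
        by (rule C[OF ug _ cardN])
    qed
    have "(\<forall>w\<in>S. q + 1 \<le> min_cut_card (Gm_V V M) (Gm_E V E M m) (Some w) None) =
       (\<forall>w\<in>S. \<forall>X. X \<subseteq> V - M \<and> card X \<le> q \<and> w \<notin> X \<longrightarrow> ?R X w)"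
      using H by (intro ball_cong refl) 
    then show ?thesis using sw by simp
  qed
  have s3: "(\<forall>w\<in>S. q + 1 \<le> min_cut_card (Gm_V V M) (Gm_E V E M m) (Some w) None)
      \<longleftrightarrow> Gamma (Gm_V V M) (Gm_E V E M m) (Some ` S) None \<ge> q + 1"
    unfolding Gamma_def using finS assms(4) by (simp add: Min_ge_iff)
  show ?thesis using trans[OF trans[OF s1 s2] s3] .
qed

end
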